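(* Let $f\in\mathcal{C}$ and $f^\ast(t):=tf(1/t)$, $t>0$, with $f^\ast(0):=\lim_{t\downarrow0}f^\ast(t)$. For all probability measures $P,Q$: (1) for $w\in(0,\frac12]$, $$D_f(P\|Q)\ge f^\ast\!\Bigl(1+\frac{\mathcal{I}_w(P\|Q)}{1-w}\Bigr)+f^\ast\!\Bigl(\frac{w-\mathcal{I}_w(P\|Q)}{1-w}\Bigr)-f^\ast\!\Bigl(\frac{w}{1-w}\Bigr);$$ (2) for $w\in(\frac12,1)$, $$D_f(P\|Q)\ge f^\ast\!\Bigl(1+\frac{\mathcal{I}_w(Q\|P)}{w}\Bigr)+f^\ast\!\Bigl(\frac{1-w-\mathcal{I}_w(Q\|P)}{w}\Bigr)-f^\ast\!\Bigl(\frac{1-w}{w}\Bigr).$$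
   Context: $\mathcal{C}$ is the set of convex $f\colon(0,\infty)\to\mathbb{R}$ with $f(1)=0$. For densities $p,q$ w.r.t. a dominating measure $\mu$, $D_f(P\|Q):=\int qf(p/q)\,\mathrm{d}\mu$ with conventions $f(0):=\lim_{t\downarrow0}f(t)$, $0f(0/0)=0$, $0f(a/0)=a\lim_{u\to\infty}f(u)/u$. DeGroot statistical information: $\mathcal{I}_\omega(P\|Q):=D_{\phi_\omega}(P\|Q)$ with $\phi_\omega(t)=\min\{\omega,1-\omega\}-\min\{\omega t,1-\omega\}$, $\omega\in(0,1)$. *)

theory Defs
  imports "HOL-Analysis.Analysis"
begin

definition f_at_zero :: "(real \<Rightarrow> real) \<Rightarrow> ereal" where
  "f_at_zero f = Lim (at_right 0) (\<lambda>t. ereal (f t))"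

definition f_slope_inf :: "(real \<Rightarrow> real) \<Rightarrow> ereal" where
  "f_slope_inf f = Lim at_top (\<lambda>u. ereal (f u / u))"

text \<open>Pointwise integrand q f(p/q) with the conventions
  f(0) := lim f(t), 0 f(0/0) = 0, 0 f(a/0) = a lim f(u)/u.\<close>
definition fdiv_integrand :: "(real \<Rightarrow> real) \<Rightarrow> real \<Rightarrow> real \<Rightarrow> ereal" where
  "fdiv_integrand f a b =
     (if b > 0 then (if a > 0 then ereal (b * f (a / b)) else ereal b * f_at_zero f)
      else (if a > 0 then ereal a * f_slope_inf f else 0))"

text \<open>D_f(P||Q) = integral of q f(p/q) d mu, for densities p, q w.r.t. mu;
  the Lebesgue integral of an extended-real function written as positive part minus negative part.\<close>
definition f_div :: "(real \<Rightarrow> real) \<Rightarrow> 'a measure \<Rightarrow> ('a \<Rightarrow> real) \<Rightarrow> ('a \<Rightarrow> real) \<Rightarrow> ereal" where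
  "f_div f \<mu> p q =
     enn2ereal (\<integral>\<^sup>+ x. e2ennreal (max 0 (fdiv_integrand f (p x) (q x))) \<partial>\<mu>)
   - enn2ereal (\<integral>\<^sup>+ x. e2ennreal (max 0 (- fdiv_integrand f (p x) (q x))) \<partial>\<mu>)"

definition phi_DG :: "real \<Rightarrow> real \<Rightarrow> real" where
  "phi_DG \<omega> t = min \<omega> (1 - \<omega>) - min (\<omega> * t) (1 - \<omega>)"

text \<open>DeGroot statistical information (always finite, so taken as a real number).\<close>
definition DeGroot_info :: "real \<Rightarrow> 'a measure \<Rightarrow> ('a \<Rightarrow> real) \<Rightarrow> ('a \<Rightarrow> real) \<Rightarrow> real" where
  "DeGroot_info \<omega> \<mu> p q = real_of_ereal (f_div (phi_DG \<omega>) \<mu> p q)"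

definition fstar :: "(real \<Rightarrow> real) \<Rightarrow> real \<Rightarrow> ereal" where
  "fstar f t = (if t > 0 then ereal (t * f (1 / t))
                else Lim (at_right 0) (\<lambda>s. ereal (s * f (1 / s))))"

definition is_prob_density :: "'a measure \<Rightarrow> ('a \<Rightarrow> real) \<Rightarrow> bool" where
  "is_prob_density \<mu> p \<longleftrightarrow> p \<in> borel_measurable \<mu> \<and> (\<forall>x\<in>space \<mu>. 0 \<le> p x)
      \<and> (\<integral>\<^sup>+ x. ennreal (p x) \<partial>\<mu>) = 1"

end

theory Submission imports Defs begin

lemma persp_convex:
  fixes f :: "real \<Rightarrow> real"
  assumes cf: "convex_on {0<..} f"
  shows "convex_on {0<..} (\<lambda>t. t * f (1/t))"
proof (rule convex_onI)
  fix t x y :: real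
  assume t: "0 < t" "t < 1" and x: "x \<in> {0<..}" and y: "y \<in> {0<..}"
  hence xp: "x > 0" and yp: "y > 0" by auto
  define z where "z = (1 - t) * x + t * y"
  have zp: "z > 0" unfolding z_def using t xp yp by (simp add: add_pos_pos)
  define l where "l = t * y / z"
  have l0: "0 \<le> l" "l \<le> 1" unfolding l_def using t xp yp zp
    by (auto simp: divide_simps z_def)
  have h1: "1 - l = (1-t)*x/z" using zp unfolding l_def by (simp add: field_simps z_def)
  have eq: "1 / z = (1 - l) *\<^sub>R (1/x) + l *\<^sub>R (1/y)"
    unfolding h1 unfolding l_def using zp xp yp by (simp add: field_simps)
  have "f (1/z) \<le> (1 - l) * f (1/x) + l * f (1/y)"
    unfolding eq by (rule convex_onD[OF cf l0]) (use xp yp in auto)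
  hence "z * f (1/z) \<le> z * ((1 - l) * f (1/x) + l * f (1/y))"
    using zp by (simp add: mult_left_mono)
  also have "\<dots> = (1 - t) * (x * f (1/x)) + t * (y * f (1/y))"
  proof -
    have a: "z*(1-l) = (1-t)*x" using zp by (simp add: h1)
    have b: "z*l = t*y" using zp by (simp add: l_def)
    have "z * ((1 - l) * f (1/x) + l * f (1/y)) = (z*(1-l)) * f (1/x) + (z*l) * f (1/y)"
      by (simp add: algebra_simps)
    then show ?thesis unfolding a b by (simp add: algebra_simps)
  qed
  finally show "((1 - t) *\<^sub>R x + t *\<^sub>R y) * f (1 / ((1 - t) *\<^sub>R x + t *\<^sub>R y))
      \<le> (1 - t) * (x * f (1 / x)) + t * (y * f (1 / y))"
    by (simp add: z_def)
qed (rule convex_real_interval)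

lemma slope3:
  fixes g :: "real \<Rightarrow> real"
  assumes cg: "convex_on {0<..} g" and "0 < a" "a < b" "b < c"
  shows "(g b - g a) / (b - a) \<le> (g c - g a) / (c - a)"
    and "(g c - g a) / (c - a) \<le> (g c - g b) / (c - b)"
proof -
  have e: "\<And>x y. (g x - g y) / (x - y) = (g y - g x) / (y - x)"
    by (metis minus_diff_eq minus_divide_divide)
  show "(g b - g a) / (b - a) \<le> (g c - g a) / (c - a)"
    using convex_on_slope_le(1)[OF cg, of a c b] assms by (auto simp: e)
  show "(g c - g a) / (c - a) \<le> (g c - g b) / (c - b)"
    using convex_on_slope_le(2)[OF cg, of a c b] assms by (auto simp: e)
qed

lemma slope_mono:
  fixes g :: "real \<Rightarrow> real"
  assumes cg: "convex_on {0<..} g" and "0 < x" "x < y" "y \<le> v" "x \<le> u" "u < v"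
  shows "(g y - g x) / (y - x) \<le> (g v - g u) / (v - u)"
proof -
  have "(g y - g x) / (y - x) \<le> (g v - g x) / (v - x)"
    using slope3(1)[OF cg, of x y v] assms by (cases "y = v") auto
  also have "\<dots> \<le> (g v - g u) / (v - u)"
    using slope3(2)[OF cg, of x u v] assms by (cases "x = u") auto
  finally show ?thesis .
qed

lemma subgrad:
  fixes g :: "real \<Rightarrow> real"
  assumes cg: "convex_on {0<..} g" and z: "0 < z"
  shows "\<exists>c. \<forall>y>0. g z + c * (y - z) \<le> g y"
proof -
  define S where "S = (\<lambda>x. (g z - g x) / (z - x)) ` {0<..<z}"
  have ne: "S \<noteq> {}" unfolding S_def using z by (auto intro!: exI[of _ "z/2"])
  have ub: "\<And>s. s \<in> S \<Longrightarrow> s \<le> (g (z+1) - g z) / ((z+1) - z)"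
  proof -
    fix s assume "s \<in> S"
    then obtain x where x: "0 < x" "x < z" "s = (g z - g x) / (z - x)" unfolding S_def by auto
    show "s \<le> (g (z+1) - g z) / ((z+1) - z)"
      using slope_mono[OF cg x(1) x(2), of "z+1" z] x by simp
  qed
  hence bdd: "bdd_above S" by (meson bdd_aboveI)
  define c where "c = Sup S"
  show ?thesis
  proof (intro exI allI impI)
    fix y :: real assume y: "y > 0"
    consider "y < z" | "y = z" | "y > z" by linarith
    then show "g z + c * (y - z) \<le> g y"
    proof cases
      case 1
      have "(g z - g y) / (z - y) \<le> c" unfolding c_def
        by (rule cSup_upper[OF _ bdd]) (use 1 y in \<open>auto simp: S_def\<close>)
      with 1 show ?thesis by (simp add: divide_simps algebra_simps split: if_splits)
    next
      case 2 then show ?thesis by simp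
    next
      case 3
      have "c \<le> (g y - g z) / (y - z)" unfolding c_def
        by (rule cSup_least[OF ne]) (use 3 slope_mono[OF cg] z in \<open>auto simp: S_def\<close>)
      with 3 show ?thesis by (simp add: divide_simps algebra_simps split: if_splits)
    qed
  qed
qed

lemma mono_lim_right:
  fixes h :: "real \<Rightarrow> ereal"
  assumes d: "0 < d" and mono: "\<And>s t. 0 < s \<Longrightarrow> s \<le> t \<Longrightarrow> t < d \<Longrightarrow> h s \<le> h t"
  shows "(h \<longlongrightarrow> Inf (h ` {0<..<d})) (at_right 0)"
proof (rule order_tendstoI)
  fix y assume y: "y < Inf (h ` {0<..<d})"
  show "eventually (\<lambda>t. y < h t) (at_right 0)"
    using eventually_at_right_real[OF d]
  proof eventually_elim
    case (elim t)
    hence "Inf (h ` {0<..<d}) \<le> h t" by (intro Inf_lower) auto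
    with y show ?case by auto
  qed
next
  fix y assume y: "Inf (h ` {0<..<d}) < y"
  then obtain t0 where t0: "t0 \<in> {0<..<d}" "h t0 < y" by (auto simp: Inf_less_iff)
  show "eventually (\<lambda>t. h t < y) (at_right 0)"
    using eventually_at_right_real[of 0 t0, OF conjunct1[OF t0(1)[simplified]]]
  proof eventually_elim
    case (elim t)
    hence "h t \<le> h t0" using t0 by (intro mono) auto
    with t0 show ?case by auto
  qed
qed

lemma antimono_lim_right:
  fixes h :: "real \<Rightarrow> ereal"
  assumes d: "0 < d" and mono: "\<And>s t. 0 < s \<Longrightarrow> s \<le> t \<Longrightarrow> t < d \<Longrightarrow> h t \<le> h s"
  shows "(h \<longlongrightarrow> Sup (h ` {0<..<d})) (at_right 0)"
proof (rule order_tendstoI)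
  fix y assume y: "Sup (h ` {0<..<d}) > y"
  then obtain t0 where t0: "t0 \<in> {0<..<d}" "h t0 > y" by (auto simp: less_Sup_iff)
  show "eventually (\<lambda>t. y < h t) (at_right 0)"
    using eventually_at_right_real[of 0 t0, OF conjunct1[OF t0(1)[simplified]]]
  proof eventually_elim
    case (elim t)
    hence "h t0 \<le> h t" using t0 by (intro mono) auto
    with t0 show ?case by auto
  qed
next
  fix y assume y: "Sup (h ` {0<..<d}) < y"
  show "eventually (\<lambda>t. h t < y) (at_right 0)"
    using eventually_at_right_real[OF d]
  proof eventually_elim
    case (elim t)
    hence "h t \<le> Sup (h ` {0<..<d})" by (intro Sup_upper) auto
    with y show ?case by auto
  qed
qed

lemma conv_lim0:
  fixes g :: "real \<Rightarrow> real"
  assumes cg: "convex_on {0<..} g"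
  shows "\<exists>L. ((\<lambda>t. ereal (g t)) \<longlongrightarrow> L) (at_right 0)"
proof (cases "\<exists>d>0. \<forall>s t. 0 < s \<longrightarrow> s \<le> t \<longrightarrow> t < d \<longrightarrow> g t \<le> g s")
  case True
  then obtain d where "d > 0" "\<And>s t. 0 < s \<Longrightarrow> s \<le> t \<Longrightarrow> t < d \<Longrightarrow> g t \<le> g s" by blast
  then show ?thesis using antimono_lim_right[of d "\<lambda>t. ereal (g t)"] by auto
next
  case False
  note nA = False
  have m: "g s \<le> g t" if st: "0 < s" "s \<le> t" for s t
  proof (cases "s = t")
    case False
    with st have "s < t" by simp
    from nA st(1) obtain x y where xy: "0 < x" "x \<le> y" "y < s" "\<not> g y \<le> g x" by blast
    hence "x < y" by (metis order.order_iff_strict)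
    have "0 < (g y - g x) / (y - x)" using xy \<open>x < y\<close> by simp
    also have "\<dots> \<le> (g t - g s) / (t - s)"
      using slope_mono[OF cg xy(1) \<open>x < y\<close>, of t s] xy \<open>s < t\<close> by simp
    finally show ?thesis using \<open>s < t\<close> by (simp add: divide_simps)
  qed simp
  show ?thesis using mono_lim_right[of 1 "\<lambda>t. ereal (g t)"] m by auto
qed

lemma integral_as_ereal:
  fixes h :: "'a \<Rightarrow> real"
  assumes hi: "integrable M h"
  shows "ereal (\<integral>x. h x \<partial>M) = enn2ereal (\<integral>\<^sup>+x. ennreal (h x) \<partial>M) - enn2ereal (\<integral>\<^sup>+x. ennreal (- h x) \<partial>M)"
proof -
  define P where "P = (\<integral>\<^sup>+x. ennreal (h x) \<partial>M)"
  define N where "N = (\<integral>\<^sup>+x. ennreal (- h x) \<partial>M)"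
  have fin: "P \<noteq> \<infinity>" "N \<noteq> \<infinity>" using hi unfolding real_integrable_def P_def N_def by auto
  have "P = ennreal (enn2real P)" using fin by (simp add: less_top)
  hence eP: "enn2ereal P = ereal (enn2real P)" by (metis enn2ereal_ennreal enn2real_nonneg)
  have "N = ennreal (enn2real N)" using fin by (simp add: less_top)
  hence eN: "enn2ereal N = ereal (enn2real N)" by (metis enn2ereal_ennreal enn2real_nonneg)
  show ?thesis unfolding real_lebesgue_integral_def[OF hi] P_def[symmetric] N_def[symmetric] eP eN
    by simp
qed

lemma e2ennreal_max0: "e2ennreal (max 0 x) = e2ennreal x"
  by (cases "x \<le> 0") (auto simp: e2ennreal_neg max_def)

lemma f_div_ge:
  fixes h :: "'a \<Rightarrow> real"
  assumes hi: "integrable \<mu> h" and ae: "AE x in \<mu>. ereal (h x) \<le> fdiv_integrand f (p x) (q x)"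
  shows "ereal (\<integral>x. h x \<partial>\<mu>) \<le> f_div f \<mu> p q"
proof -
  have A: "(\<integral>\<^sup>+x. ennreal (h x) \<partial>\<mu>) \<le> (\<integral>\<^sup>+ x. e2ennreal (max 0 (fdiv_integrand f (p x) (q x))) \<partial>\<mu>)"
    using ae by (intro nn_integral_mono_AE) (auto simp: e2ennreal_max0 elim!: eventually_mono dest: e2ennreal_mono)
  have B: "(\<integral>\<^sup>+ x. e2ennreal (max 0 (- fdiv_integrand f (p x) (q x))) \<partial>\<mu>) \<le> (\<integral>\<^sup>+x. ennreal (- h x) \<partial>\<mu>)"
  proof (intro nn_integral_mono_AE)
    show "AE x in \<mu>. e2ennreal (max 0 (- fdiv_integrand f (p x) (q x))) \<le> ennreal (- h x)"
      using ae
    proof eventually_elim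
      case (elim x)
      hence "- fdiv_integrand f (p x) (q x) \<le> ereal (- h x)" by (simp add: ereal_uminus_le_reorder)
      from e2ennreal_mono[OF this] show ?case by (simp add: e2ennreal_max0)
    qed
  qed
  show ?thesis unfolding integral_as_ereal[OF hi] f_div_def
    by (intro ereal_minus_mono) (use A B in \<open>auto simp: less_eq_ennreal.rep_eq\<close>)
qed

lemma f_div_eq:
  fixes h :: "'a \<Rightarrow> real"
  assumes hi: "integrable \<mu> h" and eq: "\<And>x. x \<in> space \<mu> \<Longrightarrow> fdiv_integrand f (p x) (q x) = ereal (h x)"
  shows "f_div f \<mu> p q = ereal (\<integral>x. h x \<partial>\<mu>)"
proof -
  have "(\<integral>\<^sup>+ x. e2ennreal (max 0 (fdiv_integrand f (p x) (q x))) \<partial>\<mu>) = (\<integral>\<^sup>+x. ennreal (h x) \<partial>\<mu>)"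
    by (intro nn_integral_cong) (simp add: eq e2ennreal_max0)
  moreover have "(\<integral>\<^sup>+ x. e2ennreal (max 0 (- fdiv_integrand f (p x) (q x))) \<partial>\<mu>) = (\<integral>\<^sup>+x. ennreal (- h x) \<partial>\<mu>)"
    by (intro nn_integral_cong) (simp add: eq e2ennreal_max0)
  ultimately show ?thesis unfolding integral_as_ereal[OF hi] f_div_def by simp
qed

lemma lim_ge_aff:
  fixes \<phi> :: "real \<Rightarrow> real"
  assumes L: "((\<lambda>t. ereal (\<phi> t)) \<longlongrightarrow> L) (at_right 0)"
    and ge: "\<And>t. t > 0 \<Longrightarrow> A + B * t \<le> \<phi> t"
  shows "ereal A \<le> L"
proof (rule tendsto_le[OF trivial_limit_at_right_real L])
  have "((\<lambda>t. A + B * t) \<longlongrightarrow> A + B * 0) (at_right 0)"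
    by (intro tendsto_intros)
  then show "((\<lambda>t. ereal (A + B * t)) \<longlongrightarrow> ereal A) (at_right 0)"
    by (intro tendsto_ereal) simp
  show "eventually (\<lambda>t. ereal (A + B * t) \<le> ereal (\<phi> t)) (at_right 0)"
    using eventually_at_right_real[OF zero_less_one] by eventually_elim (use ge in auto)
qed

lemma dens_int:
  assumes "is_prob_density \<mu> p"
  shows "integrable \<mu> p" "(\<integral>x. p x \<partial>\<mu>) = 1"
proof -
  have "(\<integral>\<^sup>+x. p x \<partial>\<mu>) = ennreal 1 \<longleftrightarrow> (integrable \<mu> p \<and> integral\<^sup>L \<mu> p = 1)"
    using assms unfolding is_prob_density_def by (intro nn_integral_eq_integrable) auto
  with assms show "integrable \<mu> p" "(\<integral>x. p x \<partial>\<mu>) = 1" unfolding is_prob_density_def by auto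
qed

lemma fstar0_lim:
  assumes cf: "convex_on {0<..} f"
  shows "((\<lambda>s. ereal (s * f (1/s))) \<longlongrightarrow> fstar f 0) (at_right 0)"
proof -
  obtain L where L: "((\<lambda>s. ereal (s * f (1/s))) \<longlongrightarrow> L) (at_right 0)"
    using conv_lim0[OF persp_convex[OF cf]] by blast
  have "fstar f 0 = L" unfolding fstar_def using tendsto_Lim[OF trivial_limit_at_right_real L] by simp
  with L show ?thesis by simp
qed

lemma f_at_zero_lim:
  assumes cf: "convex_on {0<..} f"
  shows "((\<lambda>t. ereal (f t)) \<longlongrightarrow> f_at_zero f) (at_right 0)"
proof -
  obtain L where L: "((\<lambda>t. ereal (f t)) \<longlongrightarrow> L) (at_right 0)"
    using conv_lim0[OF cf] by blast
  have "f_at_zero f = L" unfolding f_at_zero_def using tendsto_Lim[OF trivial_limit_at_right_real L] by simp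
  with L show ?thesis by simp
qed

lemma f_slope_inf_eq:
  assumes cf: "convex_on {0<..} f"
  shows "f_slope_inf f = fstar f 0"
proof -
  have "((\<lambda>u. ereal (inverse u * f (1 / inverse u))) \<longlongrightarrow> fstar f 0) at_top"
    using filterlim_compose[OF fstar0_lim[OF cf] filterlim_inverse_at_right_top] by simp
  moreover have "eventually (\<lambda>u. ereal (inverse u * f (1 / inverse u)) = ereal (f u / u)) at_top"
    using eventually_gt_at_top[of 0] by eventually_elim (simp add: field_simps)
  ultimately have "((\<lambda>u. ereal (f u / u)) \<longlongrightarrow> fstar f 0) at_top"
    using tendsto_cong by fastforce
  then show ?thesis unfolding f_slope_inf_def by (intro tendsto_Lim) auto
qed

lemma degroot:
  assumes w: "0 < w" "w < 1" and P: "is_prob_density \<mu> p" and Q: "is_prob_density \<mu> q"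
  shows "DeGroot_info w \<mu> p q = min w (1-w) - (\<integral>x. min (w * p x) ((1-w) * q x) \<partial>\<mu>)"
proof -
  define c where "c = min w (1-w)"
  have z: "f_at_zero (phi_DG w) = ereal c"
  proof -
    have "((\<lambda>t. c - min (w*t) (1-w)) \<longlongrightarrow> c - min (w*0) (1-w)) (at_right 0)"
      by (intro tendsto_intros)
    hence "((\<lambda>t. ereal (phi_DG w t)) \<longlongrightarrow> ereal c) (at_right 0)"
      using w by (intro tendsto_ereal) (simp add: phi_DG_def c_def)
    then show ?thesis unfolding f_at_zero_def by (intro tendsto_Lim) auto
  qed
  have s: "f_slope_inf (phi_DG w) = 0"
  proof -
    have "((\<lambda>u. (c - (1-w)) * inverse u) \<longlongrightarrow> (c - (1-w)) * 0) at_top"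
      by (intro tendsto_intros tendsto_inverse_0_at_top filterlim_ident)
    moreover have "eventually (\<lambda>u. (c - (1-w)) * inverse u = phi_DG w u / u) at_top"
      using eventually_ge_at_top[of "(1-w)/w"]
    proof eventually_elim
      case (elim u)
      hence "w * u \<ge> 1 - w" using w by (simp add: field_simps)
      then show ?case by (simp add: phi_DG_def c_def divide_inverse min_def)
    qed
    ultimately have "((\<lambda>u. phi_DG w u / u) \<longlongrightarrow> 0) at_top"
      using tendsto_cong by fastforce
    hence "((\<lambda>u. ereal (phi_DG w u / u)) \<longlongrightarrow> ereal 0) at_top"
      by (intro tendsto_ereal)
    then show ?thesis unfolding f_slope_inf_def by (intro tendsto_Lim) (auto simp: zero_ereal_def)
  qed
  have pi: "integrable \<mu> p" and qi: "integrable \<mu> q" using dens_int P Q by auto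
  have pn: "\<And>x. x \<in> space \<mu> \<Longrightarrow> 0 \<le> p x" and qn: "\<And>x. x \<in> space \<mu> \<Longrightarrow> 0 \<le> q x"
    using P Q unfolding is_prob_density_def by auto
  have hi: "integrable \<mu> (\<lambda>x. c * q x - min (w * p x) ((1-w) * q x))"
    using pi qi by auto
  have "f_div (phi_DG w) \<mu> p q = ereal (\<integral>x. c * q x - min (w * p x) ((1-w) * q x) \<partial>\<mu>)"
  proof (rule f_div_eq[OF hi])
    fix x assume x: "x \<in> space \<mu>"
    have a: "p x \<ge> 0" "q x \<ge> 0" using pn qn x by auto
    show "fdiv_integrand (phi_DG w) (p x) (q x) = ereal (c * q x - min (w * p x) ((1 - w) * q x))"
    proof (cases "q x > 0")
      case True
      show ?thesis
      proof (cases "p x > 0")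
        case True
        have "q x * phi_DG w (p x / q x) = c * q x - q x * min (w * (p x / q x)) (1 - w)"
          by (simp add: phi_DG_def c_def algebra_simps)
        also have "q x * min (w * (p x / q x)) (1 - w) = min (w * p x) ((1-w) * q x)"
          using \<open>q x > 0\<close> by (simp add: min_mult_distrib_left algebra_simps)
        finally show ?thesis using \<open>q x > 0\<close> True unfolding fdiv_integrand_def by simp
      next
        case False
        hence "p x = 0" using a by simp
        then show ?thesis using \<open>q x > 0\<close> w unfolding fdiv_integrand_def z by (simp add: min_def)
      qed
    next
      case False
      hence "q x = 0" using a by simp
      then show ?thesis using a w unfolding fdiv_integrand_def s by (simp add: min_def mult_le_0_iff)
    qed
  qed
  also have "(\<integral>x. c * q x - min (w * p x) ((1-w) * q x) \<partial>\<mu>) = c - (\<integral>x. min (w * p x) ((1-w) * q x) \<partial>\<mu>)"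
    using pi qi dens_int(2)[OF Q] by (simp add: integral_diff)
  finally show ?thesis unfolding DeGroot_info_def c_def by simp
qed

lemma pt_pos:
  fixes g :: "real \<Rightarrow> real"
  assumes pq: "P > 0" "Q > 0" and a: "a > 0" and m: "m > 0" and M: "M > 0"
    and c1: "\<And>y. y > 0 \<Longrightarrow> g m + c1 * (y - m) \<le> g y"
    and c2: "\<And>y. y > 0 \<Longrightarrow> g M + c2 * (y - M) \<le> g y"
  shows "(g m - c1*m + g M + c2*(a - M) - g a) * P + c2 * Q + (c1 - c2) * min Q (a * P) \<le> P * g (Q/P)"
proof -
  define r where "r = Q / P"
  have r: "r > 0" using pq by (simp add: r_def)
  have sw: "g (min r a) + g (max r a) = g r + g a" by (cases "r \<le> a") (auto simp: min_def max_def)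
  have h1: "g m + c1 * (min r a - m) \<le> g (min r a)" using c1 r a by simp
  have h2: "g M + c2 * (max r a - M) \<le> g (max r a)" using c2 r a by simp
  have mn: "P * min r a = min Q (a * P)" using pq by (simp add: min_mult_distrib_left r_def algebra_simps)
  have mx: "P * max r a = Q + a * P - min Q (a * P)"
    using pq by (cases "r \<le> a") (auto simp: r_def min_def max_def field_simps)
  have "(g m - c1*m + g M + c2*(a - M) - g a) * P + c2 * Q + (c1 - c2) * min Q (a * P)
      = P * (g m + c1 * (min r a - m) + g M + c2 * (max r a - M) - g a)"
  proof -
    have "P * (g m + c1 * (min r a - m) + g M + c2 * (max r a - M) - g a)
       = P * (g m - c1 * m + g M - c2 * M - g a) + c1 * (P * min r a) + c2 * (P * max r a)"
      by (simp add: algebra_simps)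
    also have "\<dots> = (g m - c1*m + g M + c2*(a - M) - g a) * P + c2 * Q + (c1 - c2) * min Q (a * P)"
      unfolding mn mx by (simp add: algebra_simps)
    finally show ?thesis by simp
  qed
  also have "\<dots> \<le> P * (g r)"
    using pq h1 h2 sw by (intro mult_left_mono) auto
  finally show ?thesis by (simp add: r_def)
qed

lemma core:
  fixes f :: "real \<Rightarrow> real"
  assumes cf: "convex_on {0<..} f" and P: "is_prob_density \<mu> p" and Q: "is_prob_density \<mu> q"
    and a: "a > 0"
  defines "m \<equiv> (\<integral>x. min (q x) (a * p x) \<partial>\<mu>)"
  shows "fstar f (1 + a - m) + fstar f m - fstar f a \<le> f_div f \<mu> p q"
proof -
  define g where "g = (\<lambda>t::real. t * f (1/t))"
  have cg: "convex_on {0<..} g" unfolding g_def by (rule persp_convex[OF cf])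
  have fs: "\<And>t. t > 0 \<Longrightarrow> fstar f t = ereal (g t)" by (simp add: fstar_def g_def)
  have pi: "integrable \<mu> p" and qi: "integrable \<mu> q" using dens_int P Q by auto
  have p1: "(\<integral>x. p x \<partial>\<mu>) = 1" and q1: "(\<integral>x. q x \<partial>\<mu>) = 1" using dens_int P Q by auto
  have pn: "\<And>x. x \<in> space \<mu> \<Longrightarrow> 0 \<le> p x" and qn: "\<And>x. x \<in> space \<mu> \<Longrightarrow> 0 \<le> q x"
    using P Q unfolding is_prob_density_def by auto
  define n where "n = (\<lambda>x. min (q x) (a * p x))"
  have ni: "integrable \<mu> n" unfolding n_def using pi qi by auto
  have m_def': "m = (\<integral>x. n x \<partial>\<mu>)" unfolding m_def n_def ..
  have m0: "m \<ge> 0" unfolding m_def' n_def using pn qn a by (intro integral_nonneg_AE AE_I2) (auto simp: pn qn)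
  have m1: "m \<le> 1" unfolding m_def' n_def q1[symmetric] using ni qi unfolding n_def
    by (intro integral_mono) auto
  define M where "M = 1 + a - m"
  have M: "M > 0" "M - a = 1 - m" using m1 a by (auto simp: M_def)
  obtain c2 where c2: "\<And>y. y > 0 \<Longrightarrow> g M + c2 * (y - M) \<le> g y" using subgrad[OF cg M(1)] by blast
  have f0: "ereal c2 \<le> f_at_zero f"
  proof (rule lim_ge_aff[OF f_at_zero_lim[OF cf], of c2 "g M - c2 * M"])
    fix t :: real assume t: "t > 0"
    have "g M + c2 * (1/t - M) \<le> g (1/t)" using c2 t by simp
    hence "t * (g M + c2 * (1/t - M)) \<le> t * g (1/t)" using t by (simp add: mult_left_mono)
    then show "c2 + (g M - c2 * M) * t \<le> f t" using t by (simp add: g_def algebra_simps)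
  qed
  have slope: "f_slope_inf f = fstar f 0" by (rule f_slope_inf_eq[OF cf])
  have RHS: "fstar f (1 + a - m) = ereal (g M)" "fstar f a = ereal (g a)"
    using fs M a by (auto simp: M_def)
  show ?thesis
  proof (cases "m > 0")
    case True
    obtain c1 where c1: "\<And>y. y > 0 \<Longrightarrow> g m + c1 * (y - m) \<le> g y" using subgrad[OF cg True] by blast
    have G0: "ereal (g m - c1 * m) \<le> fstar f 0"
    proof (rule lim_ge_aff[OF fstar0_lim[OF cf], of "g m - c1 * m" c1])
      fix t :: real assume "t > 0"
      then show "g m - c1 * m + c1 * t \<le> t * f (1 / t)" using c1[of t] by (simp add: g_def algebra_simps)
    qed
    define A0 where "A0 = g m - c1*m + g M + c2*(a - M) - g a"
    have A0le: "A0 \<le> g m - c1 * m" using c2[OF a] by (simp add: A0_def)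
    define h where "h = (\<lambda>x. A0 * p x + c2 * q x + (c1 - c2) * n x)"
    have hi: "integrable \<mu> h" unfolding h_def using pi qi ni by auto
    have hint: "(\<integral>x. h x \<partial>\<mu>) = g m + g M - g a"
    proof -
      have "(\<integral>x. h x \<partial>\<mu>) = A0 * (\<integral>x. p x \<partial>\<mu>) + c2 * (\<integral>x. q x \<partial>\<mu>) + (c1 - c2) * (\<integral>x. n x \<partial>\<mu>)"
        unfolding h_def using pi qi ni by (simp add: integral_add)
      also have "\<dots> = A0 + c2 + (c1 - c2) * m" using p1 q1 m_def' by simp
      also have "\<dots> = g m + g M - g a" unfolding A0_def M_def by (simp add: algebra_simps)
      finally show ?thesis .
    qed
    have "ereal (\<integral>x. h x \<partial>\<mu>) \<le> f_div f \<mu> p q"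
    proof (rule f_div_ge[OF hi], rule AE_I2)
      fix x assume x: "x \<in> space \<mu>"
      have nn: "p x \<ge> 0" "q x \<ge> 0" using pn qn x by auto
      show "ereal (h x) \<le> fdiv_integrand f (p x) (q x)"
      proof (cases "q x > 0")
        case qpos: True
        show ?thesis
        proof (cases "p x > 0")
          case True
          have e: "q x * f (p x / q x) = p x * g (q x / p x)" using True qpos by (simp add: g_def)
          have "h x \<le> p x * g (q x / p x)"
            unfolding h_def n_def A0_def by (rule pt_pos[OF True qpos a \<open>m > 0\<close> M(1) c1 c2])
          then show ?thesis using True qpos e unfolding fdiv_integrand_def by simp
        next
          case False
          hence "p x = 0" using nn by simp
          hence hx: "h x = q x * c2" unfolding h_def n_def using qpos by (simp add: min_def)
          have "ereal (q x) * ereal c2 \<le> ereal (q x) * f_at_zero f" using f0 nn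
            by (intro ereal_mult_left_mono) auto
          then show ?thesis using \<open>p x = 0\<close> qpos hx unfolding fdiv_integrand_def by simp
        qed
      next
        case False
        hence q0: "q x = 0" using nn by simp
        show ?thesis
        proof (cases "p x > 0")
          case True
          hence hx: "h x = p x * A0" unfolding h_def n_def using q0 a by (simp add: min_def)
          have "ereal A0 \<le> ereal (g m - c1 * m)" using A0le by simp
          also note G0
          finally have "ereal A0 \<le> fstar f 0" .
          hence "ereal (p x) * ereal A0 \<le> ereal (p x) * fstar f 0" using nn
            by (intro ereal_mult_left_mono) auto
          then show ?thesis using True q0 hx slope unfolding fdiv_integrand_def by simp
        next
          case False
          hence "p x = 0" using nn by simp
          then show ?thesis using q0 unfolding fdiv_integrand_def h_def n_def by simp
        qed
      qed
    qed
    moreover have "fstar f m = ereal (g m)" using fs True by simp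
    ultimately show ?thesis unfolding RHS hint by (simp add: ac_simps)
  next
    case False
    hence mz: "m = 0" using m0 by simp
    have c2a: "g M - g a \<le> c2" using c2[OF a] M mz by (simp add: algebra_simps)
    have aen: "AE x in \<mu>. n x = 0"
      using integral_nonneg_eq_0_iff_AE[OF ni] mz m_def' pn qn a unfolding n_def
      by (auto intro!: AE_I2)
    have key: "ereal (c2 + K) \<le> f_div f \<mu> p q" if K: "ereal K \<le> fstar f 0" for K
    proof -
      define h where "h = (\<lambda>x. c2 * q x + K * p x)"
      have hi: "integrable \<mu> h" unfolding h_def using pi qi by auto
      have hint: "(\<integral>x. h x \<partial>\<mu>) = c2 + K"
        unfolding h_def using pi qi p1 q1 by (simp add: integral_add)
      have "ereal (\<integral>x. h x \<partial>\<mu>) \<le> f_div f \<mu> p q"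
      proof (rule f_div_ge[OF hi])
        show "AE x in \<mu>. ereal (h x) \<le> fdiv_integrand f (p x) (q x)"
          using aen
        proof (rule AE_mp, intro AE_I2 impI)
          fix x assume x: "x \<in> space \<mu>" and nx: "n x = 0"
          have nn: "p x \<ge> 0" "q x \<ge> 0" using pn qn x by auto
          have np: "\<not> (p x > 0 \<and> q x > 0)"
          proof
            assume "p x > 0 \<and> q x > 0"
            hence "min (q x) (a * p x) > 0" using a by simp
            then show False using nx unfolding n_def by simp
          qed
          consider "p x = 0" "q x = 0" | "p x = 0" "q x > 0" | "p x > 0" "q x = 0"
            using nn np by force
          then show "ereal (h x) \<le> fdiv_integrand f (p x) (q x)"
          proof cases
            case 1 then show ?thesis unfolding h_def fdiv_integrand_def by simp
          next
            case 2
            have "ereal (q x) * ereal c2 \<le> ereal (q x) * f_at_zero f" using f0 nn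
              by (intro ereal_mult_left_mono) auto
            then show ?thesis using 2 unfolding h_def fdiv_integrand_def by (simp add: mult.commute)
          next
            case 3
            have "ereal (p x) * ereal K \<le> ereal (p x) * fstar f 0" using K nn
              by (intro ereal_mult_left_mono) auto
            then show ?thesis using 3 slope unfolding h_def fdiv_integrand_def by (simp add: mult.commute)
          qed
        qed
      qed
      then show ?thesis using hint by simp
    qed
    show ?thesis
    proof (cases "fstar f 0")
      case (real G)
      have "ereal (g M) + fstar f 0 - ereal (g a) = ereal (g M + G - g a)" using real by simp
      also have "\<dots> \<le> ereal (c2 + G)" using c2a by simp
      also have "\<dots> \<le> f_div f \<mu> p q" using key[of G] real by simp
      finally have "ereal (g M) + fstar f 0 - ereal (g a) \<le> f_div f \<mu> p q" .
      then show ?thesis using RHS mz by simp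
    next
      case PInf
      have "f_div f \<mu> p q = \<infinity>"
      proof (rule ereal_top)
        fix B
        have "ereal (c2 + (B - c2)) \<le> f_div f \<mu> p q" using key[of "B - c2"] PInf by simp
        then show "ereal B \<le> f_div f \<mu> p q" by simp
      qed
      then show ?thesis by simp
    next
      case MInf
      then show ?thesis using RHS mz by simp
    qed
  qed
qed

theorem corollary4:
  fixes f :: "real \<Rightarrow> real" and \<mu> :: "'a measure" and p q :: "'a \<Rightarrow> real" and w :: real
  assumes "convex_on {0<..} f" and "f 1 = 0"
    and "is_prob_density \<mu> p" and "is_prob_density \<mu> q"
  shows "(0 < w \<and> w \<le> 1/2 \<longrightarrow>
            f_div f \<mu> p q \<ge>
              fstar f (1 + DeGroot_info w \<mu> p q / (1 - w))
            + fstar f ((w - DeGroot_info w \<mu> p q) / (1 - w))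
            - fstar f (w / (1 - w)))
       \<and> (1/2 < w \<and> w < 1 \<longrightarrow>
            f_div f \<mu> p q \<ge>
              fstar f (1 + DeGroot_info w \<mu> q p / w)
            + fstar f ((1 - w - DeGroot_info w \<mu> q p) / w)
            - fstar f ((1 - w) / w))"
proof (intro conjI impI)
  note cf = assms(1) and P = assms(3) and Q = assms(4)
  have pi: "integrable \<mu> p" and qi: "integrable \<mu> q" using dens_int P Q by auto
  {
    assume w: "0 < w \<and> w \<le> 1/2"
    define I where "I = DeGroot_info w \<mu> p q"
    have I: "I = w - (\<integral>x. min (w * p x) ((1-w) * q x) \<partial>\<mu>)"
      unfolding I_def using degroot[OF _ _ P Q, of w] w by (simp add: min_def)
    define a where "a = w / (1 - w)"
    have a: "a > 0" using w by (simp add: a_def)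
    have "(\<integral>x. min (q x) (a * p x) \<partial>\<mu>) = (\<integral>x. min (w * p x) ((1-w) * q x) / (1-w) \<partial>\<mu>)"
    proof (intro Bochner_Integration.integral_cong refl)
      fix x
      have "min (w * p x) ((1-w) * q x) / (1-w) = min (w * p x / (1-w)) ((1-w) * q x / (1-w))"
        using w by (simp add: min_divide_distrib_right)
      then show "min (q x) (a * p x) = min (w * p x) ((1-w) * q x) / (1-w)"
        using w by (simp add: a_def min.commute)
    qed
    also have "\<dots> = (w - I) / (1 - w)" by (simp add: I)
    finally have m: "(\<integral>x. min (q x) (a * p x) \<partial>\<mu>) = (w - I) / (1 - w)" .
    have e1: "1 + a - (w - I) / (1 - w) = 1 + I / (1 - w)" using w by (simp add: a_def field_simps)
    from core[OF cf P Q a] show "f_div f \<mu> p q \<ge>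
              fstar f (1 + DeGroot_info w \<mu> p q / (1 - w))
            + fstar f ((w - DeGroot_info w \<mu> p q) / (1 - w))
            - fstar f (w / (1 - w))"
      unfolding m e1 I_def[symmetric] by (simp add: a_def)
  }
  {
    assume w: "1/2 < w \<and> w < 1"
    define I where "I = DeGroot_info w \<mu> q p"
    have I: "I = (1 - w) - (\<integral>x. min (w * q x) ((1-w) * p x) \<partial>\<mu>)"
      unfolding I_def using degroot[OF _ _ Q P, of w] w by (simp add: min_def)
    define a where "a = (1 - w) / w"
    have a: "a > 0" using w by (simp add: a_def)
    have "(\<integral>x. min (q x) (a * p x) \<partial>\<mu>) = (\<integral>x. min (w * q x) ((1-w) * p x) / w \<partial>\<mu>)"
    proof (intro Bochner_Integration.integral_cong refl)
      fix x
      have "min (w * q x) ((1-w) * p x) / w = min (w * q x / w) ((1-w) * p x / w)"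
        using w by (simp add: min_divide_distrib_right)
      then show "min (q x) (a * p x) = min (w * q x) ((1-w) * p x) / w"
        using w by (simp add: a_def)
    qed
    also have "\<dots> = (1 - w - I) / w" by (simp add: I)
    finally have m: "(\<integral>x. min (q x) (a * p x) \<partial>\<mu>) = (1 - w - I) / w" .
    have e1: "1 + a - (1 - w - I) / w = 1 + I / w" using w by (simp add: a_def field_simps)
    from core[OF cf P Q a] show "f_div f \<mu> p q \<ge>
              fstar f (1 + DeGroot_info w \<mu> q p / w)
            + fstar f ((1 - w - DeGroot_info w \<mu> q p) / w)
            - fstar f ((1 - w) / w)"
      unfolding m e1 I_def[symmetric] by (simp add: a_def)
  }
qed

end
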